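(* Let $\mu$ be a Borel probability measure on the unit circle $\mathbb{S}^1\subset\mathbb{R}^2$. Then $$\int_{\mathbb{S}^1}\int_{\mathbb{S}^1}\int_{\mathbb{S}^1}\left|\langle x,y\rangle\langle x,z\rangle\langle y,z\rangle\right|\,d\mu(x)\,d\mu(y)\,d\mu(z)\ge\frac14,$$ with equality if and only if $\mu$ is, up to central symmetry, a convex combination of uniform distributions over two (not necessarily distinct) orthonormal bases; that is, letting $\pi:\mathbb{S}^1\to\mathbb{S}^1/\{\pm1\}$ be the quotient map $x\mapsto[x]=\{x,-x\}$, equality holds if and only if there exist unit vectors $a,b\in\mathbb{S}^1$ and $\lambda\in[0,1]$ such that $$\pi_*\mu=\lambda\left(\tfrac12\delta_{[a]}+\tfrac12\delta_{[a^\perp]}\right)+(1-\lambda)\left(\tfrac12\delta_{[b]}+\tfrac12\delta_{[b^\perp]}\right),$$ where $v^\perp$ denotes a unit vector orthogonal to $v$.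
   Context: $\langle\cdot,\cdot\rangle$ is the Euclidean inner product on $\mathbb{R}^2$; $\pi_*\mu$ denotes the pushforward measure and $\delta$ a Dirac mass. *)

theory Defs
  imports "HOL-Probability.Probability"
begin

definition triple_energy :: "(real^2) measure \<Rightarrow> real" where
  "triple_energy M = (\<integral>z. (\<integral>y. (\<integral>x. \<bar>(x \<bullet> y) * (x \<bullet> z) * (y \<bullet> z)\<bar> \<partial>M) \<partial>M) \<partial>M)"

text \<open>Pushforward of M to S^1/{+-1} described on its Borel sets, i.e. on
  centrally symmetric Borel sets A (A = -A).\<close>
definition two_bases_mixture ::
  "(real^2) measure \<Rightarrow> real^2 \<Rightarrow> real^2 \<Rightarrow> real^2 \<Rightarrow> real^2 \<Rightarrow> real \<Rightarrow> bool" where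
  "two_bases_mixture M a a' b b' lam \<longleftrightarrow>
     (\<forall>A \<in> sets borel. uminus ` A = A \<longrightarrow>
        measure M A =
          lam * (indicator A a / 2 + indicator A a' / 2)
          + (1 - lam) * (indicator A b / 2 + indicator A b' / 2))"

end

theory Submission
  imports Defs
begin


lemma inner2: "(x::real^2) \<bullet> y = x$1*y$1 + x$2*y$2"
  by (simp add: inner_vec_def sum_2)

lemma norm2: "norm (x::real^2) = 1 \<longleftrightarrow> x$1^2 + x$2^2 = 1"
proof -
  have "norm x = sqrt (x \<bullet> x)" by (simp add: norm_eq_sqrt_inner)
  then show ?thesis by (simp add: inner2 power2_eq_square)
qed

lemma sphere2: "(x::real^2) \<in> sphere 0 1 \<longleftrightarrow> x$1^2 + x$2^2 = 1"
  using norm2[of x] by simp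

lemma unitD: "(x::real^2) \<in> sphere 0 1 \<Longrightarrow> x$1^2 + x$2^2 = 1"
  using sphere2 by blast

definition phi :: "real^2 \<Rightarrow> real^2" where
  "phi x = vector [x$1^2 - x$2^2, 2*x$1*x$2]"

lemma phi1: "phi x $ 1 = x$1^2 - x$2^2" and phi2: "phi x $ 2 = 2*x$1*x$2"
  by (simp_all add: phi_def)

lemma continuous_phi: "continuous_on UNIV phi"
proof -
  have e: "phi = (\<lambda>x. \<chi> i. if i = 1 then x$1^2 - x$2^2 else 2*x$1*x$2)"
    by (auto simp: phi_def vec_eq_iff forall_2)
  have "continuous_on UNIV (\<lambda>x::real^2. \<chi> i::2. if i = 1 then x$1^2 - x$2^2 else 2*x$1*x$2)"
    by (intro continuous_on_vec_lambda) (case_tac "i = 1"; simp; intro continuous_intros)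
  then show ?thesis by (subst e)
qed

definition Pf :: "real^2 \<Rightarrow> real^2 \<Rightarrow> real^2 \<Rightarrow> real" where
  "Pf x y z = (x \<bullet> y) * (x \<bullet> z) * (y \<bullet> z)"

definition Qf :: "real^2 \<Rightarrow> real^2 \<Rightarrow> real^2 \<Rightarrow> real" where
  "Qf x y z = \<bar>Pf x y z\<bar> - Pf x y z"

lemma Pf_unit:
  assumes "x \<in> sphere 0 1" "y \<in> sphere 0 1" "z \<in> sphere 0 1"
  shows "Pf x y z = 1/4 + (phi x \<bullet> phi y + phi x \<bullet> phi z + phi y \<bullet> phi z)/4"
proof -
  have "x$1^2+x$2^2=1" "y$1^2+y$2^2=1" "z$1^2+z$2^2=1" using assms by (simp_all only: unitD)
  then show ?thesis unfolding Pf_def inner2 phi1 phi2 by algebra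
qed

lemma abs_inner_le1: "x \<in> sphere 0 1 \<Longrightarrow> y \<in> sphere 0 1 \<Longrightarrow> \<bar>x \<bullet> (y::real^2)\<bar> \<le> 1"
  using Cauchy_Schwarz_ineq2[of x y] by simp

lemma abs_Pf_le1:
  assumes "x \<in> sphere 0 1" "y \<in> sphere 0 1" "z \<in> sphere 0 1"
  shows "\<bar>Pf x y z\<bar> \<le> 1"
proof -
  have "\<bar>Pf x y z\<bar> = \<bar>x \<bullet> y\<bar> * \<bar>x \<bullet> z\<bar> * \<bar>y \<bullet> z\<bar>" by (simp add: Pf_def abs_mult)
  also have "\<dots> \<le> 1 * 1 * 1"
    by (intro mult_mono abs_inner_le1 assms) auto
  finally show ?thesis by simp
qed

lemma Qf_nonneg: "0 \<le> Qf x y z" by (simp add: Qf_def)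

lemma Qf_le2:
  assumes "x \<in> sphere 0 1" "y \<in> sphere 0 1" "z \<in> sphere 0 1"
  shows "Qf x y z \<le> 2"
  using abs_Pf_le1[OF assms] by (auto simp: Qf_def abs_if)

lemma phi_le1: "x \<in> sphere 0 1 \<Longrightarrow> \<bar>phi x $ i\<bar> \<le> 1"
proof -
  assume "x \<in> sphere 0 1"
  then have h: "x$1^2+x$2^2=1" by (rule unitD)
  have "i = 1 \<or> i = 2" using exhaust_2 by blast
  moreover have "\<bar>x$1^2-x$2^2\<bar> \<le> 1"
  proof -
    have a: "0 \<le> x$1^2" "0 \<le> x$2^2" by simp_all
    show ?thesis unfolding abs_le_iff using h a by linarith
  qed
  moreover have "\<bar>2*x$1*x$2\<bar> \<le> 1"
  proof -
    have a: "0 \<le> (x$1 - x$2)^2" "0 \<le> (x$1 + x$2)^2" by simp_all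
    then have "0 \<le> x$1^2 - 2*x$1*x$2 + x$2^2" "0 \<le> x$1^2 + 2*x$1*x$2 + x$2^2"
      by (simp_all add: power2_diff power2_sum)
    then show ?thesis unfolding abs_le_iff using h by linarith
  qed
  ultimately show ?thesis by (auto simp: phi1 phi2)
qed

locale S1M = prob_space M for M :: "(real^2) measure" +
  assumes sM: "sets M = sets borel" and aeS: "AE x in M. x \<in> sphere 0 1"
begin

lemma meas_M: "f \<in> borel_measurable borel \<Longrightarrow> f \<in> borel_measurable M"
  by (subst measurable_cong_sets[OF sM refl])

lemma sets_MM: "sets (M \<Otimes>\<^sub>M M) = sets borel"
proof -
  have "sets (M \<Otimes>\<^sub>M M) = sets (borel \<Otimes>\<^sub>M borel)" by (rule sets_pair_measure_cong[OF sM sM])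
  also have "\<dots> = sets borel" by (subst borel_prod) (rule refl)
  finally show ?thesis .
qed

lemma sets_MMM: "sets ((M \<Otimes>\<^sub>M M) \<Otimes>\<^sub>M M) = sets borel"
proof -
  have "sets ((M \<Otimes>\<^sub>M M) \<Otimes>\<^sub>M M) = sets (borel \<Otimes>\<^sub>M borel)" by (rule sets_pair_measure_cong[OF sets_MM sM])
  also have "\<dots> = sets borel" by (subst borel_prod) (rule refl)
  finally show ?thesis .
qed

lemma meas_MM: "continuous_on UNIV f \<Longrightarrow> f \<in> borel_measurable (M \<Otimes>\<^sub>M M)"
  using measurable_cong_sets[OF sets_MM refl] borel_measurable_continuous_onI by blast

lemma meas_MMM: "continuous_on UNIV f \<Longrightarrow> f \<in> borel_measurable ((M \<Otimes>\<^sub>M M) \<Otimes>\<^sub>M M)"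
  using measurable_cong_sets[OF sets_MMM refl] borel_measurable_continuous_onI by blast

lemma meas_cont: "continuous_on UNIV f \<Longrightarrow> f \<in> borel_measurable M"
  by (intro meas_M borel_measurable_continuous_onI)

lemma int_bdd:
  fixes f :: "real^2 \<Rightarrow> real"
  assumes "f \<in> borel_measurable M" "\<And>x. x \<in> sphere 0 1 \<Longrightarrow> \<bar>f x\<bar> \<le> B"
  shows "integrable M f"
  using assms aeS by (intro integrable_const_bound[where B=B]) auto

lemma cont_Pf_x: "continuous_on UNIV (\<lambda>x. Pf x y z)"
  unfolding Pf_def by (intro continuous_intros)
lemma cont_Qf_x: "continuous_on UNIV (\<lambda>x. Qf x y z)"
  unfolding Qf_def Pf_def by (intro continuous_intros)

lemma cont_phi_i: "continuous_on UNIV (\<lambda>x. phi x $ i)"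
  by (intro continuous_intros continuous_phi)

definition m1 where "m1 = (\<integral>x. phi x $ 1 \<partial>M)"
definition m2 where "m2 = (\<integral>x. phi x $ 2 \<partial>M)"

lemma int_phi: "integrable M (\<lambda>x. phi x $ i)"
  by (intro int_bdd[where B=1] meas_cont cont_phi_i phi_le1)

lemma lin_int:
  fixes f g :: "real^2 \<Rightarrow> real"
  assumes "integrable M f" "integrable M g"
  shows "(\<integral>x. c0 + c1 * f x + c2 * g x \<partial>M) = c0 + c1 * integral\<^sup>L M f + c2 * integral\<^sup>L M g"
proof -
  have "(\<integral>x. c0 + c1 * f x + c2 * g x \<partial>M) = (\<integral>x. c0 + c1 * f x \<partial>M) + (\<integral>x. c2 * g x \<partial>M)"
    using assms by (intro Bochner_Integration.integral_add) simp_all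
  also have "(\<integral>x. c0 + c1 * f x \<partial>M) = (\<integral>x. c0 \<partial>M) + (\<integral>x. c1 * f x \<partial>M)"
    using assms by (intro Bochner_Integration.integral_add) simp_all
  finally show ?thesis by (simp add: prob_space)
qed

lemma int_lin: "integrable M (\<lambda>x. c0 + c1 * phi x $ 1 + c2 * phi x $ 2)"
  using int_phi[of 1] int_phi[of 2] by simp

definition G1 where "G1 y z = (\<integral>x. Qf x y z \<partial>M)"
definition G2 where "G2 z = (\<integral>y. G1 y z \<partial>M)"

lemma level1:
  assumes y: "y \<in> sphere 0 1" and z: "z \<in> sphere 0 1"
  shows "(\<integral>x. \<bar>Pf x y z\<bar> \<partial>M) = 1/4 + (m1 * (phi y $ 1 + phi z $ 1) + m2 * (phi y $ 2 + phi z $ 2)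
            + phi y \<bullet> phi z)/4 + G1 y z"
proof -
  have iP: "integrable M (\<lambda>x. Pf x y z)"
    by (intro int_bdd[where B=1] meas_cont cont_Pf_x abs_Pf_le1 y z)
  have iQ: "integrable M (\<lambda>x. Qf x y z)"
    by (rule int_bdd[where B=2]) (use meas_cont cont_Qf_x Qf_le2 Qf_nonneg y z in auto)
  have "(\<integral>x. \<bar>Pf x y z\<bar> \<partial>M) = (\<integral>x. Pf x y z + Qf x y z \<partial>M)"
    by (simp add: Qf_def)
  also have "\<dots> = (\<integral>x. Pf x y z \<partial>M) + G1 y z"
    using iP iQ by (simp add: G1_def)
  also have "(\<integral>x. Pf x y z \<partial>M) = (\<integral>x. (1/4 + (phi y \<bullet> phi z)/4) + ((phi y $ 1 + phi z $ 1)/4) * phi x $ 1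
       + ((phi y $ 2 + phi z $ 2)/4) * phi x $ 2 \<partial>M)"
  proof (rule integral_cong_AE)
    show "(\<lambda>x. Pf x y z) \<in> borel_measurable M" by (intro meas_cont cont_Pf_x)
    show "(\<lambda>x. (1/4 + (phi y \<bullet> phi z)/4) + ((phi y $ 1 + phi z $ 1)/4) * phi x $ 1
       + ((phi y $ 2 + phi z $ 2)/4) * phi x $ 2) \<in> borel_measurable M"
      by (intro meas_cont continuous_intros continuous_phi)
    show "AE x in M. Pf x y z = (1/4 + (phi y \<bullet> phi z)/4) + ((phi y $ 1 + phi z $ 1)/4) * phi x $ 1
       + ((phi y $ 2 + phi z $ 2)/4) * phi x $ 2"
      using aeS
    proof eventually_elim
      case (elim x)
      show ?case unfolding Pf_unit[OF elim y z] inner2[of "phi x"] by (simp add: field_simps)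
    qed
  qed
  also have "\<dots> = (1/4 + (phi y \<bullet> phi z)/4) + ((phi y $ 1 + phi z $ 1)/4) * m1
       + ((phi y $ 2 + phi z $ 2)/4) * m2"
    by (subst lin_int[OF int_phi int_phi]) (simp add: m1_def m2_def)
  finally show ?thesis by (simp add: algebra_simps add_divide_distrib)
qed

lemma cont_Pf_yx: "continuous_on UNIV (\<lambda>p. \<bar>Pf (snd p) (fst p) z\<bar>)"
  unfolding Pf_def by (intro continuous_intros)
lemma cont_Qf_yx: "continuous_on UNIV (\<lambda>p. Qf (snd p) (fst p) z)"
  unfolding Qf_def Pf_def by (intro continuous_intros)
lemma cont_Pf_zyx: "continuous_on UNIV (\<lambda>p. \<bar>Pf (snd p) (snd (fst p)) (fst (fst p))\<bar>)"
  unfolding Pf_def by (intro continuous_intros)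
lemma cont_Qf_zyx: "continuous_on UNIV (\<lambda>p. Qf (snd p) (snd (fst p)) (fst (fst p)))"
  unfolding Qf_def Pf_def by (intro continuous_intros)

lemma meas_int1: "(\<lambda>y. \<integral>x. \<bar>Pf x y z\<bar> \<partial>M) \<in> borel_measurable M"
  by (rule borel_measurable_lebesgue_integral) (use meas_MM[OF cont_Pf_yx] in \<open>simp add: case_prod_beta'\<close>)

lemma meas_G1: "(\<lambda>y. G1 y z) \<in> borel_measurable M"
  unfolding G1_def
  by (rule borel_measurable_lebesgue_integral) (use meas_MM[OF cont_Qf_yx] in \<open>simp add: case_prod_beta'\<close>)

lemma meas_int1_MM: "(\<lambda>p. \<integral>x. \<bar>Pf x (snd p) (fst p)\<bar> \<partial>M) \<in> borel_measurable (M \<Otimes>\<^sub>M M)"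
  by (rule borel_measurable_lebesgue_integral) (use meas_MMM[OF cont_Pf_zyx] in \<open>simp add: case_prod_beta'\<close>)

lemma meas_G1_MM: "(\<lambda>p. G1 (snd p) (fst p)) \<in> borel_measurable (M \<Otimes>\<^sub>M M)"
  unfolding G1_def
  by (rule borel_measurable_lebesgue_integral) (use meas_MMM[OF cont_Qf_zyx] in \<open>simp add: case_prod_beta'\<close>)

lemma meas_int2: "(\<lambda>z. \<integral>y. \<integral>x. \<bar>Pf x y z\<bar> \<partial>M \<partial>M) \<in> borel_measurable M"
  by (rule borel_measurable_lebesgue_integral) (use meas_int1_MM in \<open>simp add: case_prod_beta'\<close>)

lemma meas_G2: "G2 \<in> borel_measurable M"
proof -
  have "(\<lambda>z. \<integral>y. G1 y z \<partial>M) \<in> borel_measurable M"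
    by (rule borel_measurable_lebesgue_integral) (use meas_G1_MM in \<open>simp add: case_prod_beta'\<close>)
  then show ?thesis by (simp add: G2_def[abs_def])
qed

lemma G1_bnd:
  assumes y: "y \<in> sphere 0 1" and z: "z \<in> sphere 0 1"
  shows "0 \<le> G1 y z" "G1 y z \<le> 2"
proof -
  have iQ: "integrable M (\<lambda>x. Qf x y z)"
    by (rule int_bdd[where B=2]) (use meas_cont cont_Qf_x Qf_le2 Qf_nonneg y z in auto)
  show "0 \<le> G1 y z" unfolding G1_def by (intro Bochner_Integration.integral_nonneg Qf_nonneg)
  show "G1 y z \<le> 2" unfolding G1_def
    by (rule integral_le_const[OF iQ]) (use aeS Qf_le2 y z in auto)
qed

lemma int_G1: "z \<in> sphere 0 1 \<Longrightarrow> integrable M (\<lambda>y. G1 y z)"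
  by (rule int_bdd[where B=2]) (use meas_G1 G1_bnd in auto)

lemma level2:
  assumes z: "z \<in> sphere 0 1"
  shows "(\<integral>y. \<integral>x. \<bar>Pf x y z\<bar> \<partial>M \<partial>M) = 1/4 + (m1^2 + m2^2 + 2 * (m1 * phi z $ 1 + m2 * phi z $ 2))/4 + G2 z"
proof -
  let ?L = "\<lambda>y. (1/4 + (m1 * phi z $ 1 + m2 * phi z $ 2)/4) + ((m1 + phi z $ 1)/4) * phi y $ 1
     + ((m2 + phi z $ 2)/4) * phi y $ 2"
  have cL: "continuous_on UNIV ?L" by (intro continuous_intros continuous_phi)
  have "(\<integral>y. \<integral>x. \<bar>Pf x y z\<bar> \<partial>M \<partial>M) = (\<integral>y. ?L y + G1 y z \<partial>M)"
  proof (rule integral_cong_AE)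
    show "(\<lambda>y. \<integral>x. \<bar>Pf x y z\<bar> \<partial>M) \<in> borel_measurable M" by (rule meas_int1)
    show "(\<lambda>y. ?L y + G1 y z) \<in> borel_measurable M"
      using meas_cont[OF cL] meas_G1 by measurable
    show "AE y in M. (\<integral>x. \<bar>Pf x y z\<bar> \<partial>M) = ?L y + G1 y z"
      using aeS
    proof eventually_elim
      case (elim y)
      show ?case unfolding level1[OF elim z] inner2[of "phi y"] by (simp add: field_simps)
    qed
  qed
  also have "\<dots> = (\<integral>y. ?L y \<partial>M) + G2 z"
    unfolding G2_def
    by (rule Bochner_Integration.integral_add[OF int_lin int_G1[OF z]])
  also have "(\<integral>y. ?L y \<partial>M) = (1/4 + (m1 * phi z $ 1 + m2 * phi z $ 2)/4) + ((m1 + phi z $ 1)/4) * m1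
       + ((m2 + phi z $ 2)/4) * m2"
    by (subst lin_int[OF int_phi int_phi]) (simp add: m1_def m2_def)
  finally show ?thesis by (simp add: algebra_simps add_divide_distrib power2_eq_square)
qed

lemma G2_bnd:
  assumes z: "z \<in> sphere 0 1"
  shows "0 \<le> G2 z" "G2 z \<le> 2"
proof -
  show "0 \<le> G2 z" unfolding G2_def
    by (rule integral_nonneg_AE) (use aeS G1_bnd z in auto)
  show "G2 z \<le> 2" unfolding G2_def
    by (rule integral_le_const[OF int_G1[OF z]]) (use aeS G1_bnd z in auto)
qed

lemma int_G2: "integrable M G2"
  by (rule int_bdd[where B=2]) (use meas_G2 G2_bnd in auto)

definition T where "T = (\<integral>z. G2 z \<partial>M)"

lemma T_nonneg: "0 \<le> T"
  unfolding T_def by (rule integral_nonneg_AE) (use aeS G2_bnd in auto)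

lemma level3: "triple_energy M = 1/4 + 3 * (m1^2 + m2^2)/4 + T"
proof -
  let ?L = "\<lambda>z. (1/4 + (m1^2 + m2^2)/4) + (m1/2) * phi z $ 1 + (m2/2) * phi z $ 2"
  have cL: "continuous_on UNIV ?L" by (intro continuous_intros continuous_phi)
  have "triple_energy M = (\<integral>z. \<integral>y. \<integral>x. \<bar>Pf x y z\<bar> \<partial>M \<partial>M \<partial>M)"
    by (simp add: triple_energy_def Pf_def)
  also have "\<dots> = (\<integral>z. ?L z + G2 z \<partial>M)"
  proof (rule integral_cong_AE)
    show "(\<lambda>z. \<integral>y. \<integral>x. \<bar>Pf x y z\<bar> \<partial>M \<partial>M) \<in> borel_measurable M" by (rule meas_int2)
    show "(\<lambda>z. ?L z + G2 z) \<in> borel_measurable M"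
      using meas_cont[OF cL] meas_G2 by measurable
    show "AE z in M. (\<integral>y. \<integral>x. \<bar>Pf x y z\<bar> \<partial>M \<partial>M) = ?L z + G2 z"
      using aeS
    proof eventually_elim
      case (elim z)
      show ?case unfolding level2[OF elim] by (simp add: field_simps)
    qed
  qed
  also have "\<dots> = (\<integral>z. ?L z \<partial>M) + T"
    unfolding T_def by (rule Bochner_Integration.integral_add[OF int_lin int_G2])
  also have "(\<integral>z. ?L z \<partial>M) = (1/4 + (m1^2 + m2^2)/4) + (m1/2) * m1 + (m2/2) * m2"
    by (subst lin_int[OF int_phi int_phi]) (simp add: m1_def m2_def)
  finally show ?thesis by (simp add: algebra_simps add_divide_distrib power2_eq_square)
qed

lemma lower: "triple_energy M \<ge> 1/4"
  using level3 T_nonneg by (smt (verit) zero_le_power2 divide_nonneg_nonneg)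

lemma eq_case:
  assumes "triple_energy M = 1/4"
  shows "m1 = 0" "m2 = 0" "AE z in M. AE y in M. AE x in M. Pf x y z \<ge> 0"
proof -
  have s: "m1^2 + m2^2 \<ge> 0" "T \<ge> 0" using T_nonneg by simp_all
  have e: "3 * (m1^2 + m2^2)/4 + T = 0" using assms level3 by linarith
  have h1: "m1^2 + m2^2 = 0" using e s by (simp add: add_nonneg_eq_0_iff)
  have h2: "T = 0" using e s by (simp add: add_nonneg_eq_0_iff)
  note h = h1 h2
  then show "m1 = 0" "m2 = 0" by (simp_all add: sum_power2_eq_zero_iff)
  have key: "\<And>z y. z \<in> sphere 0 1 \<Longrightarrow> y \<in> sphere 0 1 \<Longrightarrow> G1 y z = 0 \<Longrightarrow> AE x in M. Pf x y z \<ge> 0"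
  proof -
    fix z y assume z: "z \<in> sphere 0 1" and y: "y \<in> sphere 0 1" and "G1 y z = 0"
    have iQ: "integrable M (\<lambda>x. Qf x y z)"
      by (rule int_bdd[where B=2]) (use meas_cont cont_Qf_x Qf_le2 Qf_nonneg y z in auto)
    have "AE x in M. Qf x y z = 0" using \<open>G1 y z = 0\<close> unfolding G1_def
      by (subst integral_nonneg_eq_0_iff_AE[symmetric]) (use iQ Qf_nonneg in auto)
    then show "AE x in M. Pf x y z \<ge> 0"
      by eventually_elim (auto simp: Qf_def abs_if split: if_splits)
  qed
  have "AE z in M. G2 z = 0"
    using h(2) unfolding T_def
    by (subst integral_nonneg_eq_0_iff_AE[symmetric]) (use int_G2 aeS G2_bnd in auto)
  moreover have "AE z in M. z \<in> sphere 0 1 \<longrightarrow> G2 z = 0 \<longrightarrow> (AE y in M. G1 y z = 0)"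
  proof (rule AE_I2, intro impI)
    fix z assume z: "z \<in> sphere 0 1" and "G2 z = 0"
    then show "AE y in M. G1 y z = 0" unfolding G2_def
      by (subst integral_nonneg_eq_0_iff_AE[symmetric]) (use int_G1[OF z] aeS G1_bnd z in auto)
  qed
  ultimately have "AE z in M. (AE y in M. G1 y z = 0) \<and> z \<in> sphere 0 1"
    using aeS by eventually_elim blast
  then show "AE z in M. AE y in M. AE x in M. Pf x y z \<ge> 0"
  proof eventually_elim
    case (elim z)
    then have ae: "AE y in M. G1 y z = 0" and z: "z \<in> sphere 0 1" by blast+
    from ae aeS show ?case
    proof eventually_elim
      case (elim y)
      then show ?case using z key by blast
    qed
  qed
qed

end


definition rot :: "real^2 \<Rightarrow> real^2" where "rot a = vector [-(a$2), a$1]"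
lemma rot1: "rot a $ 1 = -(a$2)" and rot2: "rot a $ 2 = a$1" by (simp_all add: rot_def)

lemma vec2_eq: "(x::real^2) = y \<longleftrightarrow> x$1 = y$1 \<and> x$2 = y$2"
  by (auto simp: vec_eq_iff forall_2)

lemma idQ:
  fixes p q t b1 b2 c1 c2 v1 v2 :: real
  assumes "b1^2+b2^2=1" "c1^2+c2^2=1" "v1^2+v2^2=1"
  shows "(v1*(b1+c1)+v2*(b2+c2))^2*(1-(b1*c1+b2*c2)) + (v1*(b1-c1)+v2*(b2-c2))^2*(1+(b1*c1+b2*c2)) = 2*(1-(b1*c1+b2*c2)^2)"
  using assms by algebra

lemma idR:
  fixes a1 a2 b1 b2 c1 c2 :: real
  assumes "a1^2+a2^2=1" "b1^2+b2^2=1" "c1^2+c2^2=1"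
  shows "(1+(b1*c1+b2*c2))^2 - ((a1*b1+a2*b2)+(a1*c1+a2*c2))^2 = 2*(1+(b1*c1+b2*c2))*(-a2*b1+a1*b2)*(-a2*c1+a1*c2)"
  using assms by algebra

lemma alg1:
  fixes b c v :: "real^2"
  assumes b: "b \<in> sphere 0 1" and c: "c \<in> sphere 0 1" and v: "v \<in> sphere 0 1"
    and t: "b \<bullet> c > -1" and vb: "v \<bullet> b \<ge> b \<bullet> c" and vc: "v \<bullet> c \<ge> b \<bullet> c"
    and S: "b \<bullet> c + b \<bullet> v + c \<bullet> v \<ge> -1"
  shows "v \<bullet> (b + c) > 0"
proof (rule ccontr)
  assume np: "\<not> v \<bullet> (b + c) > 0"
  define t where "t = b \<bullet> c"
  define p where "p = v \<bullet> (b + c)"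
  define q where "q = v \<bullet> (b - c)"
  have id: "p^2 * (1 - t) + q^2 * (1 + t) = 2 * (1 - t^2)"
    unfolding p_def q_def t_def inner2 vector_add_component vector_minus_component
    using idQ[OF unitD[OF b] unitD[OF c] unitD[OF v]] by simp
  have t1: "t \<le> 1" using Cauchy_Schwarz_ineq2[of b c] b c unfolding t_def by auto
  have tm: "t > -1" using t unfolding t_def .
  have p0: "p \<le> 0" using np unfolding p_def by simp
  have pl: "p \<ge> -(1 + t)" using S unfolding p_def t_def by (simp add: inner_add_right inner_commute)
  have pp: "p^2 \<le> (1 + t)^2"
  proof -
    have "(-p)^2 \<le> (1+t)^2" by (rule power_mono) (use p0 pl in auto)
    then show ?thesis by simp
  qed
  have "p^2 * (1 - t) \<le> (1 + t)^2 * (1 - t)" by (rule mult_right_mono[OF pp]) (use t1 in auto)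
  then have "q^2 * (1 + t) \<ge> (1 + t) * (1 - t)^2" using id by (simp add: power2_eq_square algebra_simps)
  then have qq: "q^2 \<ge> (1 - t)^2" using tm by (simp add: mult.commute)
  have "\<bar>q\<bar> \<ge> 1 - t"
  proof -
    have "(1 - t)^2 \<le> \<bar>q\<bar>^2" using qq by simp
    then show ?thesis using abs_ge_zero power2_le_imp_le by blast
  qed
  moreover have "p + q = 2 * (v \<bullet> b)" "p - q = 2 * (v \<bullet> c)"
    unfolding p_def q_def by (simp_all add: inner_add_right inner_diff_right)
  ultimately have "p \<ge> 1 + t" using vb vc unfolding t_def by (auto simp: abs_if split: if_splits)
  then show False using p0 tm by simp
qed

lemma alg2:
  fixes a b c :: "real^2"
  assumes a: "a \<in> sphere 0 1" and b: "b \<in> sphere 0 1" and c: "c \<in> sphere 0 1"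
    and br: "b \<bullet> rot a > 0" and cr: "c \<bullet> rot a < 0"
    and S1: "a \<bullet> b + a \<bullet> c + b \<bullet> c \<ge> -1" and S2: "(-a) \<bullet> b + (-a) \<bullet> c + b \<bullet> c \<ge> -1"
  shows "c = -b"
proof -
  have id: "(1 + b \<bullet> c)^2 - (a \<bullet> b + a \<bullet> c)^2 = 2 * (1 + b \<bullet> c) * (b \<bullet> rot a) * (c \<bullet> rot a)"
    unfolding inner2 rot1 rot2
    using idR[OF unitD[OF a] unitD[OF b] unitD[OF c]] by (simp add: algebra_simps)
  have h1: "1 + b \<bullet> c \<ge> \<bar>a \<bullet> b + a \<bullet> c\<bar>" using S1 S2 by (simp add: abs_if)
  then have "(1 + b \<bullet> c)^2 - (a \<bullet> b + a \<bullet> c)^2 \<ge> 0"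
    by (metis abs_ge_zero diff_ge_0_iff_ge power2_abs power_mono)
  then have "0 \<le> 2 * (1 + b \<bullet> c) * (b \<bullet> rot a) * (c \<bullet> rot a)" using id by linarith
  moreover have "2 * (1 + b \<bullet> c) * (b \<bullet> rot a) * (c \<bullet> rot a) = 2 * ((1 + b \<bullet> c) * ((b \<bullet> rot a) * (c \<bullet> rot a)))"
    by (simp only: mult.assoc)
  ultimately have "(1 + b \<bullet> c) * ((b \<bullet> rot a) * (c \<bullet> rot a)) \<ge> 0" by linarith
  moreover have "(b \<bullet> rot a) * (c \<bullet> rot a) < 0" using br cr by (simp add: mult_pos_neg)
  ultimately have "1 + b \<bullet> c \<le> 0"
    by (metis less_le_not_le mult_pos_neg not_le_imp_less)
  moreover have "1 + b \<bullet> c \<ge> 0" using h1 by linarith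
  ultimately have bc: "b \<bullet> c = -1" by simp
  have bb: "b \<bullet> b = 1" "c \<bullet> c = 1" using b c by (simp_all add: power2_norm_eq_inner[symmetric])
  have "norm (b + c)^2 = (b + c) \<bullet> (b + c)" by (rule power2_norm_eq_inner)
  also have "\<dots> = b \<bullet> b + 2 * (b \<bullet> c) + c \<bullet> c" by (simp add: inner_add_left inner_add_right inner_commute)
  finally have "norm (b + c)^2 = 0" using bb bc by simp
  then have "b + c = 0" by simp
  then show ?thesis by (simp add: eq_neg_iff_add_eq_0 add.commute)
qed

lemma perp_rot:
  fixes a v :: "real^2"
  assumes a: "a \<in> sphere 0 1" and v: "v \<in> sphere 0 1" and vr: "v \<bullet> rot a = 0"
  shows "v = a \<or> v = -a"
proof -
  have ha: "a$1^2 + a$2^2 = 1" and hv: "v$1^2+v$2^2 = 1" using unitD a v by auto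
  have e: "v$2*a$1 = v$1*a$2" using vr unfolding inner2 rot1 rot2 by (simp add: algebra_simps)
  have "v$1 = (v \<bullet> a) * a$1" "v$2 = (v \<bullet> a) * a$2"
    unfolding inner2 using ha e by algebra+
  moreover have "(v \<bullet> a)^2 = 1"
  proof -
    have "v$1^2 + v$2^2 = ((v \<bullet> a) * a$1)^2 + ((v \<bullet> a) * a$2)^2"
      using \<open>v$1 = _\<close> \<open>v$2 = _\<close> by simp
    also have "\<dots> = (v \<bullet> a)^2 * (a$1^2 + a$2^2)" by (simp add: power_mult_distrib algebra_simps)
    finally have "v$1^2 + v$2^2 = (v \<bullet> a)^2 * (a$1^2 + a$2^2)" .
    then show ?thesis using ha hv by simp
  qed
  then have "v \<bullet> a = 1 \<or> v \<bullet> a = -1" by (simp add: power2_eq_1_iff)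
  ultimately show ?thesis by (auto simp: vec2_eq)
qed

lemma rot_unit:
  assumes "a \<in> sphere 0 1" shows "rot a \<in> sphere 0 1"
proof -
  have "a$1^2+a$2^2 = 1" using unitD assms by auto
  then show ?thesis unfolding sphere2 rot1 rot2 by (simp add: add.commute)
qed
lemma rot_perp: "a \<bullet> rot a = 0"
  by (simp add: inner2 rot1 rot2)



locale CL = prob_space N for N :: "(real^2) measure" + fixes K :: "(real^2) set"
  assumes sN: "sets N = sets borel" and clK: "closed K" and KS: "K \<subseteq> sphere 0 1"
    and aeK: "AE v in N. v \<in> K"
    and S3K: "\<And>a b c. a \<in> K \<Longrightarrow> b \<in> K \<Longrightarrow> c \<in> K \<Longrightarrow> a \<bullet> b + a \<bullet> c + b \<bullet> c \<ge> -1"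
    and mean0: "\<And>u. (\<integral>v. v \<bullet> u \<partial>N) = 0"
begin

lemma measN: "f \<in> borel_measurable borel \<Longrightarrow> f \<in> borel_measurable N"
  by (subst measurable_cong_sets[OF sN refl])

lemma setsN: "A \<in> sets borel \<Longrightarrow> A \<in> sets N"
  using sN by simp

lemma int_inner: "integrable N (\<lambda>v. v \<bullet> u)"
proof (rule integrable_const_bound[where B="norm u"])
  show "AE v in N. norm (v \<bullet> u) \<le> norm u"
    using aeK
  proof eventually_elim
    case (elim v)
    then have "norm v = 1" using KS by auto
    then show ?case using Cauchy_Schwarz_ineq2[of v u] by simp
  qed
  show "(\<lambda>v. v \<bullet> u) \<in> borel_measurable N" by (intro measN borel_measurable_continuous_onI continuous_intros)
qed

lemma zero_half:
  assumes "\<forall>v\<in>K. v \<bullet> u \<ge> 0"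
  shows "AE v in N. v \<bullet> u = 0"
proof -
  have "AE v in N. 0 \<le> v \<bullet> u" using aeK by eventually_elim (use assms in auto)
  then show ?thesis using integral_nonneg_eq_0_iff_AE[OF int_inner] mean0 by simp
qed

lemma no_pos: "\<not> (\<forall>v\<in>K. v \<bullet> u > 0)"
proof
  assume h: "\<forall>v\<in>K. v \<bullet> u > 0"
  then have "AE v in N. v \<bullet> u = 0" by (intro zero_half) (auto simp: less_imp_le)
  then have "AE v in N. False" using aeK by eventually_elim (use h in force)
  then show False by simp
qed

lemma K_ne: "K \<noteq> {}"
proof
  assume "K = {}"
  then have "AE v in N. False" using aeK by simp
  then show False by simp
qed

lemma unit_inner_ge: "a \<in> sphere 0 1 \<Longrightarrow> b \<in> sphere 0 1 \<Longrightarrow> a \<bullet> (b::real^2) \<ge> -1"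
  using abs_inner_le1[of a b] by simp

lemma antipodal: "\<exists>a\<in>K. -a \<in> K"
proof -
  have cK: "compact (K \<times> K)"
    using clK KS by (intro compact_Times) (auto simp: compact_eq_bounded_closed intro: bounded_subset[OF bounded_sphere])
  have "\<exists>x\<in>K \<times> K. \<forall>y\<in>K \<times> K. fst x \<bullet> snd x \<le> fst y \<bullet> snd y"
    by (rule continuous_attains_inf[OF cK]) (use K_ne in \<open>auto intro!: continuous_intros\<close>)
  then obtain b c where bK: "b \<in> K" and cK: "c \<in> K" and mn: "\<And>x y. x \<in> K \<Longrightarrow> y \<in> K \<Longrightarrow> b \<bullet> c \<le> x \<bullet> y"
    by force
  have b: "b \<in> sphere 0 1" and c: "c \<in> sphere 0 1" using bK cK KS by auto
  show ?thesis
  proof (cases "b \<bullet> c = -1")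
    case True
    have bb: "b \<bullet> b = 1" "c \<bullet> c = 1" using b c by (simp_all add: power2_norm_eq_inner[symmetric])
    have "norm (b + c)^2 = (b + c) \<bullet> (b + c)" by (rule power2_norm_eq_inner)
    also have "\<dots> = b \<bullet> b + 2 * (b \<bullet> c) + c \<bullet> c" by (simp add: inner_add_left inner_add_right inner_commute)
    finally have "norm (b + c)^2 = 0" using bb True by simp
    then have "b + c = 0" by simp
    then have "c = -b" by (simp add: eq_neg_iff_add_eq_0 add.commute)
    then show ?thesis using bK cK by blast
  next
    case False
    then have t: "b \<bullet> c > -1" using unit_inner_ge[OF b c] by simp
    have "\<forall>v\<in>K. v \<bullet> (b + c) > 0"
    proof
      fix v assume vK: "v \<in> K"
      then have v: "v \<in> sphere 0 1" using KS by auto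
      show "v \<bullet> (b + c) > 0"
      proof (rule alg1[OF b c v t])
        show "b \<bullet> c \<le> v \<bullet> b" using mn[OF vK bK] .
        show "b \<bullet> c \<le> v \<bullet> c" using mn[OF vK cK] .
        show "b \<bullet> c + b \<bullet> v + c \<bullet> v \<ge> -1" using S3K[OF bK cK vK] .
      qed
    qed
    then show ?thesis using no_pos by blast
  qed
qed

lemma fin_int:
  fixes f :: "real^2 \<Rightarrow> real"
  assumes F: "finite F" and aeF: "AE v in N. v \<in> F" and f: "f \<in> borel_measurable borel"
  shows "(\<integral>v. f v \<partial>N) = (\<Sum>u\<in>F. f u * measure N {u})"
proof -
  have Fb: "F \<in> sets borel" using F by (simp add: finite_imp_closed borel_closed)
  have "(\<integral>v. f v \<partial>N) = (\<integral>v. f v * indicator F v \<partial>N)"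
  proof (rule integral_cong_AE)
    show "f \<in> borel_measurable N" using measN f .
    show "(\<lambda>v. f v * indicator F v) \<in> borel_measurable N"
      using measN[OF f] setsN[OF Fb] by measurable
    show "AE v in N. f v = f v * indicator F v" using aeF by eventually_elim simp
  qed
  also have "\<dots> = (\<Sum>u\<in>F. f u * measure N {u})"
    by (rule integral_indicator_finite_real[OF F]) (auto simp: sN emeasure_eq_measure)
  finally show ?thesis .
qed

lemma fin_meas:
  assumes F: "finite F" and aeF: "AE v in N. v \<in> F" and B: "B \<in> sets borel"
  shows "measure N B = (\<Sum>u\<in>F. indicator B u * measure N {u})"
proof -
  have "measure N B = (\<integral>v. indicator B v \<partial>N)" using B sN by (simp add: sets.sets_into_space Int_absorb2)
  also have "\<dots> = (\<Sum>u\<in>F. indicator B u * measure N {u})"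
    by (rule fin_int[OF F aeF]) (use B in measurable)
  finally show ?thesis .
qed

lemma spaceN: "space N = UNIV"
  using sets_eq_imp_space_eq[OF sN] by simp

lemma measN_UNIV: "measure N UNIV = 1"
  using prob_space spaceN by simp

lemma unit_neq_neg:
  assumes h: "a \<in> sphere 0 1" shows "a \<noteq> -(a::real^2)"
proof
  assume "a = -a"
  then have "a$1 = -(a$1)" "a$2 = -(a$2)" by (metis vector_uminus_component)+
  then have "a$1 = 0" "a$2 = 0" by linarith+
  then show False using unitD[OF h] by simp
qed

lemma unit_self: "a \<in> sphere 0 1 \<Longrightarrow> a \<bullet> (a::real^2) = 1"
  by (simp add: power2_norm_eq_inner[symmetric])

lemma two_point:
  assumes a: "a \<in> sphere 0 1" and ae: "AE v in N. v \<in> {a, -a}"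
  shows "\<exists>p q lam. p \<in> sphere 0 1 \<and> q \<in> sphere 0 1 \<and> 0 \<le> lam \<and> lam \<le> 1 \<and>
    (\<forall>B\<in>sets borel. measure N B = lam * (indicator B p/2 + indicator B (-p)/2) + (1-lam) * (indicator B q/2 + indicator B (-q)/2))"
proof -
  have ne: "a \<noteq> -a" using unit_neq_neg[OF a] .
  define \<alpha> where "\<alpha> = measure N {a}"
  define \<beta> where "\<beta> = measure N {-a}"
  have sumF: "(\<Sum>u\<in>{a,-a}. g u) = g a + g (-a)" for g :: "real^2 \<Rightarrow> real"
    using ne by simp
  have "measure N UNIV = (\<Sum>u\<in>{a,-a}. indicator UNIV u * measure N {u})"
    by (rule fin_meas[OF _ ae]) auto
  then have s1: "\<alpha> + \<beta> = 1" using measN_UNIV unfolding sumF by (simp add: \<alpha>_def \<beta>_def)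
  have "(\<integral>v. v \<bullet> a \<partial>N) = (\<Sum>u\<in>{a,-a}. (u \<bullet> a) * measure N {u})"
    by (rule fin_int[OF _ ae]) (auto intro!: borel_measurable_continuous_onI continuous_intros)
  then have s2: "\<alpha> - \<beta> = 0" using mean0[of a] unit_self[OF a] unfolding sumF by (simp add: \<alpha>_def \<beta>_def)
  have ab: "\<alpha> = 1/2" "\<beta> = 1/2" using s1 s2 by linarith+
  show ?thesis
  proof (intro exI conjI ballI)
    fix B :: "(real^2) set" assume B: "B \<in> sets borel"
    have "measure N B = (\<Sum>u\<in>{a,-a}. indicator B u * measure N {u})"
      by (rule fin_meas[OF _ ae B]) auto
    then have "measure N B = indicator B a * \<alpha> + indicator B (-a) * \<beta>"
      unfolding sumF \<alpha>_def \<beta>_def .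
    then show "measure N B = 1 * (indicator B a/2 + indicator B (-a)/2) + (1-1) * (indicator B a/2 + indicator B (-a)/2)"
      using ab by simp
  qed (use a in auto)
qed

lemma four_point:
  assumes a: "a \<in> sphere 0 1" and b: "b \<in> sphere 0 1" and br: "b \<bullet> rot a > 0"
    and ae: "AE v in N. v \<in> {a, -a, b, -b}"
  shows "\<exists>p q lam. p \<in> sphere 0 1 \<and> q \<in> sphere 0 1 \<and> 0 \<le> lam \<and> lam \<le> 1 \<and>
    (\<forall>B\<in>sets borel. measure N B = lam * (indicator B p/2 + indicator B (-p)/2) + (1-lam) * (indicator B q/2 + indicator B (-q)/2))"
proof -
  have ar: "a \<bullet> rot a = 0" by (rule rot_perp)
  have d1: "a \<noteq> -a" using unit_neq_neg[OF a] .
  have d2: "b \<noteq> -b" using unit_neq_neg[OF b] .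
  have d3: "a \<noteq> b" "-a \<noteq> b" using ar br by auto
  have d4: "a \<noteq> -b" "-a \<noteq> -b" using ar br by auto
  define \<alpha> where "\<alpha> = measure N {a}"
  define \<beta> where "\<beta> = measure N {-a}"
  define \<gamma> where "\<gamma> = measure N {b}"
  define \<delta> where "\<delta> = measure N {-b}"
  have sumF: "(\<Sum>u\<in>{a,-a,b,-b}. g u) = g a + g (-a) + g b + g (-b)" for g :: "real^2 \<Rightarrow> real"
    using d1 d2 d3 d4 by simp
  have "measure N UNIV = (\<Sum>u\<in>{a,-a,b,-b}. indicator UNIV u * measure N {u})"
    by (rule fin_meas[OF _ ae]) auto
  then have s1: "\<alpha> + \<beta> + \<gamma> + \<delta> = 1" using measN_UNIV unfolding sumF by (simp add: \<alpha>_def \<beta>_def \<gamma>_def \<delta>_def)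
  have "(\<integral>v. v \<bullet> rot a \<partial>N) = (\<Sum>u\<in>{a,-a,b,-b}. (u \<bullet> rot a) * measure N {u})"
    by (rule fin_int[OF _ ae]) (auto intro!: borel_measurable_continuous_onI continuous_intros)
  then have "(\<gamma> - \<delta>) * (b \<bullet> rot a) = 0" using mean0[of "rot a"] ar unfolding sumF
    by (simp add: \<alpha>_def \<beta>_def \<gamma>_def \<delta>_def algebra_simps) auto
  then have s2: "\<gamma> = \<delta>" using br by simp
  have "(\<integral>v. v \<bullet> a \<partial>N) = (\<Sum>u\<in>{a,-a,b,-b}. (u \<bullet> a) * measure N {u})"
    by (rule fin_int[OF _ ae]) (auto intro!: borel_measurable_continuous_onI continuous_intros)
  then have "\<alpha> - \<beta> + (\<gamma> - \<delta>) * (b \<bullet> a) = 0" using mean0[of a] unit_self[OF a] unfolding sumF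
    by (simp add: \<alpha>_def \<beta>_def \<gamma>_def \<delta>_def algebra_simps inner_commute)
  then have s3: "\<alpha> = \<beta>" using s2 by simp
  have nn: "0 \<le> \<alpha>" "0 \<le> \<gamma>" by (simp_all add: \<alpha>_def \<gamma>_def)
  show ?thesis
  proof (intro exI conjI ballI)
    fix B :: "(real^2) set" assume B: "B \<in> sets borel"
    have "measure N B = (\<Sum>u\<in>{a,-a,b,-b}. indicator B u * measure N {u})"
      by (rule fin_meas[OF _ ae B]) auto
    then have "measure N B = indicator B a * \<alpha> + indicator B (-a) * \<beta> + indicator B b * \<gamma> + indicator B (-b) * \<delta>"
      unfolding sumF \<alpha>_def \<beta>_def \<gamma>_def \<delta>_def .
    moreover have g: "1 - 2 * \<alpha> = 2 * \<gamma>" using s1 s2 s3 by linarith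
    ultimately show "measure N B = (2*\<alpha>) * (indicator B a/2 + indicator B (-a)/2) + (1-2*\<alpha>) * (indicator B b/2 + indicator B (-b)/2)"
      unfolding g using s2 s3 by (simp add: algebra_simps)
  next
    show "0 \<le> 2 * \<alpha>" using nn by simp
    show "2 * \<alpha> \<le> 1" using nn s1 s2 s3 by linarith
  qed (use a b in auto)
qed

lemma classify:
  "\<exists>p q lam. p \<in> sphere 0 1 \<and> q \<in> sphere 0 1 \<and> 0 \<le> lam \<and> lam \<le> 1 \<and>
    (\<forall>B\<in>sets borel. measure N B = lam * (indicator B p/2 + indicator B (-p)/2) + (1-lam) * (indicator B q/2 + indicator B (-q)/2))"
proof -
  obtain a where aK: "a \<in> K" and maK: "-a \<in> K" using antipodal by blast
  have a: "a \<in> sphere 0 1" using aK KS by auto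
  define r where "r = rot a"
  show ?thesis
  proof (cases "\<forall>v\<in>K. v \<bullet> r \<ge> 0")
    case True
    have "AE v in N. v \<bullet> r = 0" by (rule zero_half[OF True])
    then have "AE v in N. v \<in> {a, -a}" using aeK
      by eventually_elim (use KS perp_rot[OF a] r_def in blast)
    then show ?thesis by (rule two_point[OF a])
  next
    case F1: False
    then obtain c where cK: "c \<in> K" and cr: "c \<bullet> r < 0" by (auto simp: not_le)
    show ?thesis
    proof (cases "\<forall>v\<in>K. v \<bullet> (-r) \<ge> 0")
      case True
      have "AE v in N. v \<bullet> (-r) = 0" by (rule zero_half[OF True])
      then have "AE v in N. v \<in> {a, -a}" using aeK
        by eventually_elim (use KS perp_rot[OF a] r_def in force)
      then show ?thesis by (rule two_point[OF a])
    next
      case False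
      then obtain b where bK: "b \<in> K" and br: "b \<bullet> r > 0" by (auto simp: not_le)
      have b: "b \<in> sphere 0 1" using bK KS by auto
      have key: "x \<in> K \<Longrightarrow> y \<in> K \<Longrightarrow> x \<bullet> r > 0 \<Longrightarrow> y \<bullet> r < 0 \<Longrightarrow> y = -x" for x y
        unfolding r_def
        by (rule alg2[OF a]) (use KS S3K[OF aK] S3K[OF maK] in auto)
      have cb: "c = -b" using key[OF bK cK br cr] .
      have vin: "v \<in> {a, -a, b, -b}" if vK: "v \<in> K" for v
      proof -
        have v: "v \<in> sphere 0 1" using vK KS by auto
        consider "v \<bullet> r > 0" | "v \<bullet> r < 0" | "v \<bullet> r = 0" by linarith
        then show ?thesis
        proof cases
          case 1 then have "c = -v" using key[OF vK cK _ cr] by simp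
          then show ?thesis using cb by simp
        next
          case 2 then show ?thesis using key[OF bK vK br] by simp
        next
          case 3 then show ?thesis using perp_rot[OF a v] r_def by blast
        qed
      qed
      from aeK have "AE v in N. v \<in> {a, -a, b, -b}" by eventually_elim (rule vin)
      then show ?thesis using four_point[OF a b] br r_def by simp
    qed
  qed
qed

end


lemma vec_nth_meas[measurable]: "(\<lambda>x::real^2. x $ i) \<in> borel_measurable borel"
  by (intro borel_measurable_continuous_onI continuous_intros)

definition psi :: "real^2 \<Rightarrow> real^2" where
  "psi v = (if v$1 = -1 then vector [0, 1] else (1 / norm (vector [1, 0] + v)) *\<^sub>R (vector [1, 0] + v))"

lemma psi_meas: "psi \<in> borel_measurable borel"
  unfolding psi_def by measurable

lemma phi_unit: assumes "x \<in> sphere 0 1" shows "phi x \<in> sphere 0 1"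
proof -
  have h: "x$1^2 + x$2^2 = 1" using unitD assms by auto
  have "(x$1^2 - x$2^2)^2 + (2*x$1*x$2)^2 = (x$1^2 + x$2^2)^2" by algebra
  then show ?thesis unfolding sphere2 phi1 phi2 using h by simp
qed

lemma phi_neg: "phi (-x) = phi x"
  by (simp add: vec2_eq phi1 phi2)

lemma phi_rot: "phi (rot a) = - phi a"
  by (simp add: vec2_eq phi1 phi2 rot1 rot2)

lemma norm2_eq: "norm (x::real^2) = sqrt (x$1^2 + x$2^2)"
  by (simp add: norm_eq_sqrt_inner inner2 power2_eq_square)

lemma psi_phi:
  assumes x: "x \<in> sphere 0 1"
  shows "psi (phi x) = x \<or> psi (phi x) = -x"
proof -
  have h: "x$1^2 + x$2^2 = 1" using unitD x by auto
  show ?thesis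
  proof (cases "x$1 = 0")
    case True
    then have "x$2^2 = 1" using h by simp
    then have "x$2 = 1 \<or> x$2 = -1" by (simp add: power2_eq_1_iff)
    moreover have "phi x $ 1 = -1" using True h by (simp add: phi1)
    ultimately show ?thesis using True by (auto simp: psi_def vec2_eq)
  next
    case False
    have ne: "phi x $ 1 \<noteq> -1" using False h by (simp add: phi1) (smt (verit) zero_less_power2 False)
    have w: "vector [1, 0] + phi x = (2 * x$1) *\<^sub>R x"
      using h by (simp add: vec2_eq phi1 phi2 power2_eq_square algebra_simps)
    have "norm (vector [1, 0] + phi x) = 2 * \<bar>x$1\<bar>"
      unfolding w using x by simp
    then have "psi (phi x) = (1 / (2 * \<bar>x$1\<bar>)) *\<^sub>R ((2 * x$1) *\<^sub>R x)"
      unfolding psi_def using ne w by simp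
    also have "\<dots> = (x$1 / \<bar>x$1\<bar>) *\<^sub>R x" by simp
    finally show ?thesis using False by (cases "x$1 > 0") (auto simp: abs_if)
  qed
qed

lemma phi_scale: "phi (c *\<^sub>R w) = (c^2) *\<^sub>R phi w"
  by (simp add: vec2_eq phi1 phi2 power2_eq_square algebra_simps)

lemma psi_props:
  assumes v: "v \<in> sphere 0 1"
  shows "psi v \<in> sphere 0 1" "phi (psi v) = v"
proof -
  have h: "v$1^2 + v$2^2 = 1" using unitD v by auto
  have "psi v \<in> sphere 0 1 \<and> phi (psi v) = v"
  proof (cases "v$1 = -1")
    case True
    then have "v$2 = 0" using h by simp
    then show ?thesis using True by (simp add: psi_def norm2 vec2_eq phi1 phi2)
  next
    case False
    define w where "w = vector [1, 0] + v"
    have w1: "w$1 = 1 + v$1" "w$2 = v$2" by (simp_all add: w_def)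
    have v1: "v$1 > -1"
    proof -
      have "v$1^2 \<le> 1" using h by (metis le_add_same_cancel1 zero_le_power2)
      then have "\<bar>v$1\<bar> \<le> 1" by (simp add: abs_square_le_1)
      then show ?thesis using False by linarith
    qed
    have "norm w ^ 2 = w \<bullet> w" by (rule power2_norm_eq_inner)
    also have "\<dots> = 2 * (1 + v$1)" unfolding inner2 w1 using h by (simp add: power2_eq_square algebra_simps)
    finally have nw: "norm w ^ 2 = 2 * (1 + v$1)" .
    then have wne: "norm w \<noteq> 0" using v1 by auto
    have pw: "phi w = (2 * (1 + v$1)) *\<^sub>R v"
      using h by (simp add: vec2_eq phi1 phi2 w1 power2_eq_square algebra_simps)
    have ps: "psi v = (1 / norm w) *\<^sub>R w" using False by (simp add: psi_def w_def)
    have "phi (psi v) = ((1 / norm w)^2 * (2 * (1 + v$1))) *\<^sub>R v"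
      unfolding ps phi_scale pw by simp
    also have "(1 / norm w)^2 * (2 * (1 + v$1)) = 1"
      using nw wne v1 by (simp add: power_one_over)
    finally have "phi (psi v) = v" by simp
    moreover have "psi v \<in> sphere 0 1" unfolding ps using wne by simp
    ultimately show ?thesis by simp
  qed
  then show "psi v \<in> sphere 0 1" "phi (psi v) = v" by auto
qed

lemma sym_ind:
  fixes A :: "(real^2) set"
  assumes A: "uminus ` A = A" and w: "w = y \<or> w = -y"
  shows "indicator A w = (indicator A y :: real)"
proof -
  have "-y \<in> A \<longleftrightarrow> y \<in> A"
  proof
    assume "-y \<in> A" then have "-(-y) \<in> uminus ` A" by (rule imageI)
    then have "y \<in> uminus ` A" by (simp only: minus_minus)
    then show "y \<in> A" using A by (simp only:)
  next
    assume "y \<in> A" then have "-y \<in> uminus ` A" by (rule imageI)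
    then show "-y \<in> A" using A by (simp only:)
  qed
  then show ?thesis using w by (auto simp: indicator_def)
qed

lemma orth_phi:
  fixes a a' :: "real^2"
  assumes a: "a \<in> sphere 0 1" and a': "a' \<in> sphere 0 1" and o: "a \<bullet> a' = 0"
  shows "phi a' = - phi a"
proof -
  have "a' \<bullet> rot (rot a) = 0" using o by (simp add: inner2 rot1 rot2 algebra_simps)
  then have "a' = rot a \<or> a' = - rot a" using perp_rot[OF rot_unit[OF a] a'] by simp
  then show ?thesis using phi_rot phi_neg by metis
qed



lemma fin_int_gen:
  fixes f :: "real^2 \<Rightarrow> real" and N :: "(real^2) measure"
  assumes P: "prob_space N" and sN: "sets N = sets borel"
    and F: "finite F" and aeF: "AE v in N. v \<in> F" and f: "f \<in> borel_measurable borel"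
  shows "(\<integral>v. f v \<partial>N) = (\<Sum>u\<in>F. f u * measure N {u})"
proof -
  interpret prob_space N by (rule P)
  have mN: "g \<in> borel_measurable borel \<Longrightarrow> g \<in> borel_measurable N" for g :: "real^2 \<Rightarrow> real"
    by (subst measurable_cong_sets[OF sN refl])
  have Fb: "F \<in> sets N" using F sN by (simp add: finite_imp_closed borel_closed)
  have "(\<integral>v. f v \<partial>N) = (\<integral>v. f v * indicator F v \<partial>N)"
  proof (rule integral_cong_AE)
    show "f \<in> borel_measurable N" using mN f .
    show "(\<lambda>v. f v * indicator F v) \<in> borel_measurable N"
      using mN[OF f] Fb by measurable
    show "AE v in N. f v = f v * indicator F v" using aeF by eventually_elim simp
  qed
  also have "\<dots> = (\<Sum>u\<in>F. f u * measure N {u})"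
    by (rule integral_indicator_finite_real[OF F]) (auto simp: sN emeasure_eq_measure)
  finally show ?thesis .
qed

lemma sum_delta_ind:
  fixes g :: "real^2 \<Rightarrow> real"
  assumes "finite F" "w \<in> F"
  shows "(\<Sum>u\<in>F. g u * indicator {u} w) = g w"
proof -
  have "(\<Sum>u\<in>F. g u * indicator {u} w) = (\<Sum>u\<in>F. if u = w then g u else 0)"
    by (rule sum.cong) (auto simp: indicator_def)
  also have "\<dots> = g w" using assms by (simp add: sum.delta')
  finally show ?thesis .
qed

locale MIX = prob_space N for N :: "(real^2) measure" +
  fixes p q :: "real^2" and lam :: real
  assumes sN: "sets N = sets borel"
    and form: "\<And>B. B \<in> sets borel \<Longrightarrow> measure N B =
        lam * (indicator B p/2 + indicator B (-p)/2) + (1-lam) * (indicator B q/2 + indicator B (-q)/2)"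
begin

definition "FF = {p, -p, q, -q}"

lemma FF_fin: "finite FF" by (simp add: FF_def)

lemma ae_FF: "AE v in N. v \<in> FF"
proof -
  have Fb: "FF \<in> sets borel" using FF_fin by (simp add: finite_imp_closed borel_closed)
  have "measure N FF = 1" using form[OF Fb] by (simp add: FF_def algebra_simps)
  then show ?thesis using AE_in_set_eq_1[of FF] Fb sN by simp
qed

lemma mix_int:
  fixes g :: "real^2 \<Rightarrow> real"
  assumes g: "g \<in> borel_measurable borel"
  shows "(\<integral>v. g v \<partial>N) = lam * (g p/2 + g (-p)/2) + (1-lam) * (g q/2 + g (-q)/2)"
proof -
  have "(\<integral>v. g v \<partial>N) = (\<Sum>u\<in>FF. g u * measure N {u})"
    by (rule fin_int_gen[OF prob_space_axioms sN FF_fin ae_FF g])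
  also have "\<dots> = (\<Sum>u\<in>FF. (lam/2) * (g u * indicator {u} p) + (lam/2) * (g u * indicator {u} (-p))
      + ((1-lam)/2) * (g u * indicator {u} q) + ((1-lam)/2) * (g u * indicator {u} (-q)))"
    by (rule sum.cong[OF refl]) (simp add: form algebra_simps)
  also have "\<dots> = (lam/2) * (\<Sum>u\<in>FF. g u * indicator {u} p) + (lam/2) * (\<Sum>u\<in>FF. g u * indicator {u} (-p))
      + ((1-lam)/2) * (\<Sum>u\<in>FF. g u * indicator {u} q) + ((1-lam)/2) * (\<Sum>u\<in>FF. g u * indicator {u} (-q))"
    by (simp add: sum.distrib sum_distrib_left)
  also have "\<dots> = (lam/2) * g p + (lam/2) * g (-p) + ((1-lam)/2) * g q + ((1-lam)/2) * g (-q)"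
  proof -
    have d: "(\<Sum>u\<in>FF. g u * indicator {u} w) = g w" if "w \<in> FF" for w
      using sum_delta_ind[OF FF_fin that] .
    have m: "p \<in> FF" "-p \<in> FF" "q \<in> FF" "-q \<in> FF" by (simp_all add: FF_def)
    show ?thesis by (simp only: d[OF m(1)] d[OF m(2)] d[OF m(3)] d[OF m(4)])
  qed
  finally show ?thesis by (simp add: algebra_simps)
qed

end

lemma S3F:
  fixes p q a b c :: "real^2"
  assumes p: "p \<in> sphere 0 1" and q: "q \<in> sphere 0 1"
    and abc: "a \<in> {p, -p, q, -q}" "b \<in> {p, -p, q, -q}" "c \<in> {p, -p, q, -q}"
  shows "a \<bullet> b + a \<bullet> c + b \<bullet> c \<ge> -1"
proof -
  have pp: "p \<bullet> p = 1" "q \<bullet> q = 1" using p q by (simp_all add: power2_norm_eq_inner[symmetric])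
  have pq: "-1 \<le> p \<bullet> q" "p \<bullet> q \<le> 1" using abs_inner_le1[OF p q] by auto
  show ?thesis using abc pq by (auto simp: pp inner_commute[of q p])
qed



lemma sym_mem:
  fixes A :: "(real^2) set"
  assumes A: "uminus ` A = A" and w: "w = y \<or> w = -y"
  shows "w \<in> A \<longleftrightarrow> y \<in> A"
  using sym_ind[OF A w] by (auto simp: indicator_def split: if_splits)

lemma inner_close:
  fixes a b a' b' :: "real^2"
  assumes "a \<in> sphere 0 1" "b' \<in> sphere 0 1" "dist a a' < e" "dist b b' < e"
  shows "\<bar>a' \<bullet> b' - a \<bullet> b\<bar> < 2 * e"
proof -
  have "a' \<bullet> b' - a \<bullet> b = (a' - a) \<bullet> b' + a \<bullet> (b' - b)"
    by (simp add: inner_diff_left inner_diff_right)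
  also have "\<bar>\<dots>\<bar> \<le> \<bar>(a' - a) \<bullet> b'\<bar> + \<bar>a \<bullet> (b' - b)\<bar>" by (rule abs_triangle_ineq)
  also have "\<bar>(a' - a) \<bullet> b'\<bar> \<le> norm (a' - a) * norm b'" by (rule Cauchy_Schwarz_ineq2)
  also have "\<bar>a \<bullet> (b' - b)\<bar> \<le> norm a * norm (b' - b)" by (rule Cauchy_Schwarz_ineq2)
  finally have "\<bar>a' \<bullet> b' - a \<bullet> b\<bar> \<le> norm (a' - a) + norm (b' - b)" using assms by simp
  moreover have "norm (a' - a) < e" "norm (b' - b) < e" using assms by (simp_all add: dist_norm norm_minus_commute)
  ultimately show ?thesis by linarith
qed

context S1M
begin

lemma spaceM: "space M = UNIV"
  using sets_eq_imp_space_eq[OF sM] by simp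

lemma phi_M: "phi \<in> measurable M borel"
  by (rule meas_cont[OF continuous_phi])

lemma ae_ex:
  assumes ae: "AE x in M. P x" and A: "A \<in> sets M" and pos: "measure M A > 0"
  shows "\<exists>x\<in>A. P x"
proof (rule ccontr)
  assume "\<not> (\<exists>x\<in>A. P x)"
  from ae obtain N0 where N0: "{x \<in> space M. \<not> P x} \<subseteq> N0" "emeasure M N0 = 0" "N0 \<in> sets M"
    by (rule AE_E)
  have "A \<subseteq> N0" using N0(1) \<open>\<not> (\<exists>x\<in>A. P x)\<close> spaceM by auto
  then have "emeasure M A \<le> emeasure M N0" by (rule emeasure_mono[OF _ N0(3)])
  then have "emeasure M A = 0" using N0(2) by simp
  then show False using pos by (simp add: emeasure_eq_measure)
qed

definition NN where "NN = distr M borel phi"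

lemma NN_prob: "prob_space NN"
  unfolding NN_def by (rule prob_space_distr[OF phi_M])

lemma sets_NN: "sets NN = sets borel" by (simp add: NN_def)

lemma measure_NN: "B \<in> sets borel \<Longrightarrow> measure NN B = measure M (phi -` B)"
  unfolding NN_def by (subst measure_distr[OF phi_M]) (auto simp: spaceM)

lemma ae_NN_S: "AE v in NN. v \<in> sphere 0 1"
proof -
  have "AE x in M. phi x \<in> sphere 0 1" using aeS by eventually_elim (rule phi_unit)
  then show ?thesis unfolding NN_def by (subst AE_distr_iff[OF phi_M]) auto
qed

lemma int_NN: "g \<in> borel_measurable borel \<Longrightarrow> (\<integral>v. g v \<partial>NN) = (\<integral>x. g (phi x) \<partial>M)"
  for g :: "real^2 \<Rightarrow> real"
  unfolding NN_def by (rule integral_distr[OF phi_M])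

lemma mean_NN: "(\<integral>v. v \<bullet> u \<partial>NN) = u$1 * m1 + u$2 * m2"
proof -
  have "(\<integral>v. v \<bullet> u \<partial>NN) = (\<integral>x. phi x \<bullet> u \<partial>M)"
    by (rule int_NN) (intro borel_measurable_continuous_onI continuous_intros)
  also have "\<dots> = (\<integral>x. 0 + u$1 * phi x $ 1 + u$2 * phi x $ 2 \<partial>M)"
    by (simp add: inner2 mult.commute)
  also have "\<dots> = u$1 * m1 + u$2 * m2"
    by (subst lin_int[OF int_phi int_phi]) (simp add: m1_def m2_def)
  finally show ?thesis .
qed

definition KK where "KK = sphere 0 1 - \<Union>{U. open U \<and> U \<in> null_sets NN}"

lemma KK_closed: "closed KK"
  unfolding KK_def by (intro closed_Diff closed_sphere open_Union) auto

lemma KK_S: "KK \<subseteq> sphere 0 1" unfolding KK_def by auto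

lemma ae_KK: "AE v in NN. v \<in> KK"
proof -
  define FF where "FF = {U. open U \<and> U \<in> null_sets NN}"
  obtain FF' where F': "FF' \<subseteq> FF" "countable FF'" "\<Union>FF' = \<Union>FF"
    using Lindelof[of FF] unfolding FF_def by auto
  have "(\<Union>U\<in>FF'. U) \<in> null_sets NN"
    by (rule null_sets_UN'[OF F'(2)]) (use F'(1) FF_def in auto)
  then have "\<Union>FF \<in> null_sets NN" using F'(3) by simp
  then have "AE v in NN. v \<notin> \<Union>FF" by (rule AE_not_in)
  then show ?thesis using ae_NN_S by eventually_elim (auto simp: KK_def FF_def)
qed

lemma KK_pos:
  assumes v: "v \<in> KK" and e: "e > 0"
  shows "measure NN (ball v e) > 0"
proof -
  interpret NNp: prob_space NN by (rule NN_prob)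
  have "ball v e \<notin> null_sets NN"
  proof
    assume "ball v e \<in> null_sets NN"
    then have "v \<in> \<Union>{U. open U \<and> U \<in> null_sets NN}" using e by auto
    then show False using v by (simp add: KK_def)
  qed
  moreover have "ball v e \<in> sets NN" by (simp add: sets_NN)
  ultimately have "emeasure NN (ball v e) \<noteq> 0" by (simp add: null_sets_def)
  then show ?thesis
    using NNp.emeasure_eq_measure measure_nonneg[of NN "ball v e"]
    by (auto simp: less_le)
qed

lemma S3_KK:
  assumes ae3: "AE z in M. AE y in M. AE x in M. Pf x y z \<ge> 0"
    and a: "a \<in> KK" and b: "b \<in> KK" and c: "c \<in> KK"
  shows "a \<bullet> b + a \<bullet> c + b \<bullet> c \<ge> -1"
proof (rule ccontr)
  assume "\<not> ?thesis"
  then have g: "a \<bullet> b + a \<bullet> c + b \<bullet> c < -1" by simp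
  define e where "e = (-1 - (a \<bullet> b + a \<bullet> c + b \<bullet> c)) / 8"
  have e0: "e > 0" using g by (simp add: e_def)
  have aS: "a \<in> sphere 0 1" and bS: "b \<in> sphere 0 1" and cS: "c \<in> sphere 0 1" using a b c KK_S by auto
  have pre: "measure M (phi -` ball w e) > 0" "phi -` ball w e \<in> sets M" if "w \<in> KK" for w
  proof -
    show "measure M (phi -` ball w e) > 0" using KK_pos[OF that e0] measure_NN[of "ball w e"] by simp
    show "phi -` ball w e \<in> sets M" using measurable_sets[OF phi_M, of "ball w e"] spaceM by simp
  qed
  have ae3': "AE z in M. z \<in> sphere 0 1 \<and> (AE y in M. y \<in> sphere 0 1 \<and> (AE x in M. x \<in> sphere 0 1 \<and> Pf x y z \<ge> 0))"
    using ae3 aeS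
  proof eventually_elim
    case (elim z)
    have "AE y in M. y \<in> sphere 0 1 \<and> (AE x in M. x \<in> sphere 0 1 \<and> Pf x y z \<ge> 0)"
      using elim(1) aeS
    proof eventually_elim
      case (elim y)
      have "AE x in M. x \<in> sphere 0 1 \<and> Pf x y z \<ge> 0" using elim(1) aeS by eventually_elim simp
      then show ?case using elim(2) by simp
    qed
    then show ?case using elim(2) by simp
  qed
  obtain z where z: "z \<in> phi -` ball c e" "z \<in> sphere 0 1"
    and aey: "AE y in M. y \<in> sphere 0 1 \<and> (AE x in M. x \<in> sphere 0 1 \<and> Pf x y z \<ge> 0)"
    using ae_ex[OF ae3' pre(2)[OF c] pre(1)[OF c]] by blast
  obtain y where y: "y \<in> phi -` ball b e" "y \<in> sphere 0 1"
    and aex: "AE x in M. x \<in> sphere 0 1 \<and> Pf x y z \<ge> 0"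
    using ae_ex[OF aey pre(2)[OF b] pre(1)[OF b]] by blast
  obtain x where x: "x \<in> phi -` ball a e" "x \<in> sphere 0 1" and P: "Pf x y z \<ge> 0"
    using ae_ex[OF aex pre(2)[OF a] pre(1)[OF a]] by blast
  have S: "phi x \<bullet> phi y + phi x \<bullet> phi z + phi y \<bullet> phi z \<ge> -1"
    using P Pf_unit[OF x(2) y(2) z(2)] by (simp add: field_simps)
  have ux: "phi x \<in> sphere 0 1" and uy: "phi y \<in> sphere 0 1" and uz: "phi z \<in> sphere 0 1"
    using phi_unit x y z by auto
  have dx: "dist a (phi x) < e" and dy: "dist b (phi y) < e" and dz: "dist c (phi z) < e"
    using x y z by auto
  have "\<bar>phi x \<bullet> phi y - a \<bullet> b\<bar> < 2 * e" by (rule inner_close[OF aS uy dx dy])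
  then have h1: "phi x \<bullet> phi y - a \<bullet> b < 2 * e" by (simp only: abs_less_iff)
  have "\<bar>phi x \<bullet> phi z - a \<bullet> c\<bar> < 2 * e" by (rule inner_close[OF aS uz dx dz])
  then have h2: "phi x \<bullet> phi z - a \<bullet> c < 2 * e" by (simp only: abs_less_iff)
  have "\<bar>phi y \<bullet> phi z - b \<bullet> c\<bar> < 2 * e" by (rule inner_close[OF bS uz dy dz])
  then have h3: "phi y \<bullet> phi z - b \<bullet> c < 2 * e" by (simp only: abs_less_iff)
  have e8: "8 * e = -1 - (a \<bullet> b + a \<bullet> c + b \<bullet> c)" by (simp add: e_def)
  show False using S h1 h2 h3 e8 e0 by linarith
qed

lemma pull_ind:
  assumes A: "uminus ` A = A" and p: "p \<in> sphere 0 1"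
  shows "indicator (psi -` A) p = (indicator A (psi p) :: real)"
    "indicator (psi -` A) (-p) = (indicator A (rot (psi p)) :: real)"
proof -
  show "indicator (psi -` A) p = (indicator A (psi p) :: real)" by (simp add: indicator_def)
  have a: "psi p \<in> sphere 0 1" "phi (psi p) = p" using psi_props[OF p] by auto
  have "-p = phi (rot (psi p))" using a(2) phi_rot by simp
  then have "psi (-p) = rot (psi p) \<or> psi (-p) = - rot (psi p)"
    using psi_phi[OF rot_unit[OF a(1)]] by simp
  then show "indicator (psi -` A) (-p) = (indicator A (rot (psi p)) :: real)"
    using sym_ind[OF A] by (simp add: indicator_def)
qed

lemma forward:
  assumes m: "m1 = 0" "m2 = 0" and ae3: "AE z in M. AE y in M. AE x in M. Pf x y z \<ge> 0"
  shows "\<exists>a a' b b' lam. norm a = 1 \<and> norm a' = 1 \<and> a \<bullet> a' = 0 \<and>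
          norm b = 1 \<and> norm b' = 1 \<and> b \<bullet> b' = 0 \<and>
          0 \<le> lam \<and> lam \<le> 1 \<and> two_bases_mixture M a a' b b' lam"
proof -
  have "CL NN KK"
  proof (rule CL.intro[OF NN_prob], rule CL_axioms.intro)
    show "sets NN = sets borel" by (rule sets_NN)
    show "closed KK" by (rule KK_closed)
    show "KK \<subseteq> sphere 0 1" by (rule KK_S)
    show "AE v in NN. v \<in> KK" by (rule ae_KK)
    show "\<And>a b c. a \<in> KK \<Longrightarrow> b \<in> KK \<Longrightarrow> c \<in> KK \<Longrightarrow> a \<bullet> b + a \<bullet> c + b \<bullet> c \<ge> -1"
      by (rule S3_KK[OF ae3])
    show "\<And>u. (\<integral>v. v \<bullet> u \<partial>NN) = 0" using mean_NN m by simp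
  qed
  then obtain p q lam where p: "p \<in> sphere 0 1" and q: "q \<in> sphere 0 1" and lam: "0 \<le> lam" "lam \<le> 1"
    and form: "\<And>B. B \<in> sets borel \<Longrightarrow> measure NN B = lam * (indicator B p/2 + indicator B (-p)/2) + (1-lam) * (indicator B q/2 + indicator B (-q)/2)"
    using CL.classify by blast
  define a where "a = psi p"
  define b where "b = psi q"
  have aS: "a \<in> sphere 0 1" and bS: "b \<in> sphere 0 1" using psi_props p q a_def b_def by auto
  have mix: "two_bases_mixture M a (rot a) b (rot b) lam"
    unfolding two_bases_mixture_def
  proof (intro ballI impI)
    fix A :: "(real^2) set" assume A: "A \<in> sets borel" and sym: "uminus ` A = A"
    have pA: "psi -` A \<in> sets borel" using measurable_sets[OF psi_meas A] by simp
    have ppA: "phi -` (psi -` A) \<in> sets M" using measurable_sets[OF phi_M pA] spaceM by simp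
    have "measure M A = measure M (phi -` (psi -` A))"
    proof (rule measure_eq_AE)
      show "AE x in M. (x \<in> A) = (x \<in> phi -` (psi -` A))"
        using aeS by eventually_elim (use sym_mem[OF sym psi_phi] in auto)
      show "A \<in> sets M" using A sM by simp
      show "phi -` (psi -` A) \<in> sets M" by (rule ppA)
    qed
    also have "\<dots> = measure NN (psi -` A)" using measure_NN[OF pA] by simp
    also have "\<dots> = lam * (indicator A a/2 + indicator A (rot a)/2) + (1-lam) * (indicator A b/2 + indicator A (rot b)/2)"
      unfolding form[OF pA] pull_ind[OF sym p] pull_ind[OF sym q] a_def b_def ..
    finally show "measure M A = lam * (indicator A a/2 + indicator A (rot a)/2) + (1-lam) * (indicator A b/2 + indicator A (rot b)/2)" .
  qed
  show ?thesis
    by (rule exI[of _ a], rule exI[of _ "rot a"], rule exI[of _ b], rule exI[of _ "rot b"], rule exI[of _ lam])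
       (use aS bS rot_unit[OF aS] rot_unit[OF bS] rot_perp lam mix in auto)
qed

lemma backward:
  assumes a: "norm a = 1" and a': "norm a' = 1" and o1: "a \<bullet> a' = 0"
    and b: "norm b = 1" and b': "norm b' = 1" and o2: "b \<bullet> b' = 0"
    and lam: "0 \<le> lam" "lam \<le> 1" and mix: "two_bases_mixture M a a' b b' lam"
  shows "triple_energy M = 1/4"
proof -
  have aS: "a \<in> sphere 0 1" "a' \<in> sphere 0 1" "b \<in> sphere 0 1" "b' \<in> sphere 0 1"
    using a a' b b' by auto
  define p where "p = phi a"
  define q where "q = phi b"
  have pS: "p \<in> sphere 0 1" "q \<in> sphere 0 1" using phi_unit aS p_def q_def by auto
  have pa': "phi a' = -p" using orth_phi[OF aS(1) aS(2) o1] p_def by simp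
  have qb': "phi b' = -q" using orth_phi[OF aS(3) aS(4) o2] q_def by simp
  have formN: "measure NN B = lam * (indicator B p/2 + indicator B (-p)/2) + (1-lam) * (indicator B q/2 + indicator B (-q)/2)"
    if B: "B \<in> sets borel" for B
  proof -
    have pB: "phi -` B \<in> sets borel"
      using measurable_sets[OF borel_measurable_continuous_onI[OF continuous_phi] B] by simp
    have sym: "uminus ` (phi -` B) = phi -` B"
    proof
      show "uminus ` (phi -` B) \<subseteq> phi -` B" by (auto simp: phi_neg)
      show "phi -` B \<subseteq> uminus ` (phi -` B)"
      proof
        fix x assume "x \<in> phi -` B"
        then have "-x \<in> phi -` B" by (simp add: phi_neg)
        then have "-(-x) \<in> uminus ` (phi -` B)" by (rule imageI)
        then show "x \<in> uminus ` (phi -` B)" by simp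
      qed
    qed
    have "measure NN B = measure M (phi -` B)" by (rule measure_NN[OF B])
    also have "\<dots> = lam * (indicator (phi -` B) a/2 + indicator (phi -` B) a'/2) + (1-lam) * (indicator (phi -` B) b/2 + indicator (phi -` B) b'/2)"
      using mix pB sym unfolding two_bases_mixture_def by blast
    also have "\<dots> = lam * (indicator B p/2 + indicator B (-p)/2) + (1-lam) * (indicator B q/2 + indicator B (-q)/2)"
      using pa' qb' by (simp add: indicator_def p_def q_def)
    finally show ?thesis .
  qed
  have "MIX NN p q lam"
    by (rule MIX.intro[OF NN_prob], rule MIX_axioms.intro) (use sets_NN formN in auto)
  then interpret MX: MIX NN p q lam .
  have mm: "m1 = 0 \<and> m2 = 0"
  proof -
    have "m1 = (\<integral>v. v $ 1 \<partial>NN)" unfolding m1_def by (subst int_NN) (auto simp: phi1)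
    also have "\<dots> = 0" by (subst MX.mix_int) auto
    finally have 1: "m1 = 0" .
    have "m2 = (\<integral>v. v $ 2 \<partial>NN)" unfolding m2_def by (subst int_NN) (auto simp: phi2)
    also have "\<dots> = 0" by (subst MX.mix_int) auto
    finally have 2: "m2 = 0" .
    show ?thesis using 1 2 by simp
  qed
  define good where "good x \<longleftrightarrow> x \<in> sphere 0 1 \<and> phi x \<in> {p, -p, q, -q}" for x
  have aeg: "AE x in M. good x"
  proof -
    have "AE v in NN. v \<in> {p, -p, q, -q}" using MX.ae_FF by (simp add: MX.FF_def)
    then have "AE x in M. phi x \<in> {p, -p, q, -q}"
      unfolding NN_def by (subst (asm) AE_distr_iff[OF phi_M]) (auto simp: finite_imp_closed borel_closed)
    then show ?thesis using aeS by eventually_elim (simp add: good_def)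
  qed
  have Q0: "Qf x y z = 0" if "good x" "good y" "good z" for x y z
  proof -
    have "phi x \<bullet> phi y + phi x \<bullet> phi z + phi y \<bullet> phi z \<ge> -1"
      by (rule S3F[OF pS]) (use that good_def in auto)
    then have "Pf x y z \<ge> 0" using Pf_unit[of x y z] that good_def by (simp add: field_simps)
    then show ?thesis by (simp add: Qf_def)
  qed
  have G10: "G1 y z = 0" if "good y" "good z" for y z
  proof -
    have "G1 y z = (\<integral>x. 0 \<partial>M)" unfolding G1_def
      by (rule integral_cong_AE) (use meas_cont[OF cont_Qf_x] aeg Q0 that in \<open>auto elim: AE_mp\<close>)
    then show ?thesis by simp
  qed
  have G20: "G2 z = 0" if "good z" for z
  proof -
    have "G2 z = (\<integral>y. 0 \<partial>M)" unfolding G2_def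
      by (rule integral_cong_AE) (use meas_G1 aeg G10 that in \<open>auto elim: AE_mp\<close>)
    then show ?thesis by simp
  qed
  have T0: "T = 0"
  proof -
    have "T = (\<integral>z. 0 \<partial>M)" unfolding T_def
      by (rule integral_cong_AE) (use meas_G2 aeg G20 in \<open>auto elim: AE_mp\<close>)
    then show ?thesis by simp
  qed
  show ?thesis using level3 mm T0 by simp
qed

end

theorem theorem4p5:
  fixes M :: "(real^2) measure"
  assumes "prob_space M"
    and "sets M = sets borel"
    and "AE x in M. x \<in> sphere 0 1"
  shows "triple_energy M \<ge> 1/4 \<and>
    (triple_energy M = 1/4 \<longleftrightarrow>
      (\<exists>a a' b b' lam. norm a = 1 \<and> norm a' = 1 \<and> a \<bullet> a' = 0 \<and>
          norm b = 1 \<and> norm b' = 1 \<and> b \<bullet> b' = 0 \<and>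
          0 \<le> lam \<and> lam \<le> 1 \<and> two_bases_mixture M a a' b b' lam))"
proof -
  interpret S1M M
    by (rule S1M.intro[OF assms(1)], rule S1M_axioms.intro) (use assms in auto)
  show ?thesis
  proof (intro conjI iffI)
    show "triple_energy M \<ge> 1/4" by (rule lower)
  next
    assume "triple_energy M = 1/4"
    then show "\<exists>a a' b b' lam. norm a = 1 \<and> norm a' = 1 \<and> a \<bullet> a' = 0 \<and>
          norm b = 1 \<and> norm b' = 1 \<and> b \<bullet> b' = 0 \<and>
          0 \<le> lam \<and> lam \<le> 1 \<and> two_bases_mixture M a a' b b' lam"
      using forward eq_case by blast
  next
    assume "\<exists>a a' b b' lam. norm a = 1 \<and> norm a' = 1 \<and> a \<bullet> a' = 0 \<and>
          norm b = 1 \<and> norm b' = 1 \<and> b \<bullet> b' = 0 \<and>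
          0 \<le> lam \<and> lam \<le> 1 \<and> two_bases_mixture M a a' b b' lam"
    then show "triple_energy M = 1/4" using backward by blast
  qed
qed

end
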